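(* Let $q\ge 2$ and $e\ge 0$ be integers. The function $$B_H(n,e)=\frac{q^n}{\sum_{i=0}^e \binom ni (q-1)^i}$$ is log-convex in $n$, i.e. $B_H(n_1,e)B_H(n_2,e)\le B_H(n_1-1,e)B_H(n_2+1,e)$ for all integers $1\le n_1\le n_2$.
   Context: A positive function $f(j)$ of an integer argument is called log-convex if $f(j_1)f(j_2)\le f(j_1-1)f(j_2+1)$ for all $j_1\le j_2$ in the support of $f$. *)

theory Defs
  imports Complex_Main
begin

definition B_H :: "nat \<Rightarrow> nat \<Rightarrow> nat \<Rightarrow> real" where
  "B_H q n e = real q ^ n / (\<Sum>i=0..e. real (n choose i) * (real q - 1) ^ i)"

end

theory Submission
  imports Defs
begin

definition VV :: "real \<Rightarrow> nat \<Rightarrow> nat \<Rightarrow> real" where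
  "VV r e n = (\<Sum>i=0..e. real (n choose i) * r ^ i)"

lemma VV_pos: "r \<ge> 0 \<Longrightarrow> VV r e n > 0"
proof -
  assume r: "r \<ge> 0"
  have "VV r e n = 1 + (\<Sum>i\<in>{0<..e}. real (n choose i) * r ^ i)"
    unfolding VV_def by (simp add: sum.atLeast_Suc_atMost greaterThanAtMost_eq_atLeastAtMost_diff atLeastSucAtMost_greaterThanAtMost)
  moreover have "(\<Sum>i\<in>{0<..e}. real (n choose i) * r ^ i) \<ge> 0"
    using r by (intro sum_nonneg) auto
  ultimately show ?thesis by linarith
qed

lemma VV_nonneg: "r \<ge> 0 \<Longrightarrow> VV r e n \<ge> 0"
  using VV_pos[of r e n] by simp

lemma VV_Suc: "VV r (Suc e) (Suc n) = VV r (Suc e) n + r * VV r e n"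
proof (induction e)
  case 0
  then show ?case by (simp add: VV_def algebra_simps)
next
  case (Suc e)
  have "VV r (Suc (Suc e)) (Suc n) = VV r (Suc e) (Suc n) + real (Suc n choose Suc (Suc e)) * r ^ Suc (Suc e)"
    by (simp add: VV_def)
  also have "\<dots> = VV r (Suc e) n + r * VV r e n + (real (n choose Suc (Suc e)) + real (n choose Suc e)) * r ^ Suc (Suc e)"
    using Suc by simp
  also have "\<dots> = VV r (Suc (Suc e)) n + r * VV r (Suc e) n"
    by (simp add: VV_def algebra_simps)
  finally show ?case .
qed

lemma binom_term: "i < e \<Longrightarrow> (Suc n choose i) * (n choose e) \<le> (n choose i) * (Suc n choose e)"
proof (cases "e \<le> n")
  case False
  then show ?thesis by (simp add: binomial_eq_0)
next
  case True
  assume ie: "i < e"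
  have a: "(Suc n - i) * (Suc n choose i) = Suc n * (n choose i)"
    using binomial_absorb_comp[of "Suc n" i] by simp
  have b: "(Suc n - e) * (Suc n choose e) = Suc n * (n choose e)"
    using binomial_absorb_comp[of "Suc n" e] by simp
  have "((Suc n choose i) * (n choose e)) * ((Suc n - i) * (Suc n - e))
      = ((Suc n - i) * (Suc n choose i)) * ((n choose e) * (Suc n - e))"
    by (simp only: mult_ac)
  also have "\<dots> = (Suc n * (n choose i)) * ((n choose e) * (Suc n - e))"
    by (simp only: a)
  also have "\<dots> \<le> (Suc n * (n choose i)) * ((n choose e) * (Suc n - i))"
    using ie by (intro mult_left_mono) auto
  also have "\<dots> = (n choose i) * (Suc n * (n choose e)) * (Suc n - i)"
    by (simp only: mult_ac)
  also have "\<dots> = (n choose i) * ((Suc n - e) * (Suc n choose e)) * (Suc n - i)"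
    by (simp only: b)
  also have "\<dots> = ((n choose i) * (Suc n choose e)) * ((Suc n - i) * (Suc n - e))"
    by (simp only: mult_ac)
  finally show ?thesis
    using True ie by (metis mult_le_cancel2 nat_0_less_mult_iff zero_less_diff le_imp_less_Suc less_trans)
qed

lemma key:
  assumes r: "r \<ge> 0"
  shows "VV r d (Suc n) * real (n choose Suc d) \<le> VV r d n * real (Suc n choose Suc d)"
proof -
  have "VV r d (Suc n) * real (n choose Suc d) = (\<Sum>i=0..d. real ((Suc n choose i) * (n choose Suc d)) * r ^ i)"
    unfolding VV_def sum_distrib_right by (rule sum.cong) (simp_all add: algebra_simps)
  also have "\<dots> \<le> (\<Sum>i=0..d. real ((n choose i) * (Suc n choose Suc d)) * r ^ i)"
  proof (intro sum_mono mult_right_mono)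
    fix i assume "i \<in> {0..d}"
    then have bt: "(Suc n choose i) * (n choose Suc d) \<le> (n choose i) * (Suc n choose Suc d)"
      using binom_term[of i "Suc d" n] by simp
    then show "real ((Suc n choose i) * (n choose Suc d)) \<le> real ((n choose i) * (Suc n choose Suc d))"
      by (simp only: of_nat_le_iff)
  qed (use r in auto)
  also have "\<dots> = VV r d n * real (Suc n choose Suc d)"
    unfolding VV_def sum_distrib_right by (rule sum.cong) (simp_all add: algebra_simps)
  finally show ?thesis .
qed

lemma VV_split: "VV r (Suc d) n = VV r d n + real (n choose Suc d) * r ^ Suc d"
  by (simp add: VV_def)

lemma ratio_dec:
  assumes r: "r \<ge> 0"
  shows "VV r d (Suc n) / VV r (Suc d) (Suc n) \<le> VV r d n / VV r (Suc d) n"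
proof -
  have p1: "VV r (Suc d) (Suc n) > 0" "VV r (Suc d) n > 0" using VV_pos r by auto
  have "VV r d (Suc n) * (real (n choose Suc d) * r ^ Suc d) \<le> VV r d n * (real (Suc n choose Suc d) * r ^ Suc d)"
    using key[OF r, of d n] r by (simp add: mult.assoc[symmetric] mult_right_mono)
  then have "VV r d (Suc n) * VV r (Suc d) n \<le> VV r d n * VV r (Suc d) (Suc n)"
    by (simp add: VV_split algebra_simps)
  then show ?thesis using p1 by (simp add: divide_simps)
qed

lemma f_dec:
  assumes r: "r \<ge> 0"
  shows "decseq (\<lambda>n. VV r (Suc d) (Suc n) / VV r (Suc d) n)"
proof (rule decseq_SucI)
  fix n
  have f: "\<And>m. VV r (Suc d) (Suc m) / VV r (Suc d) m = 1 + r * (VV r d m / VV r (Suc d) m)"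
    using VV_pos[OF r] by (simp add: VV_Suc divide_simps) (metis less_irrefl)
  show "VV r (Suc d) (Suc (Suc n)) / VV r (Suc d) (Suc n) \<le> VV r (Suc d) (Suc n) / VV r (Suc d) n"
    unfolding f using mult_left_mono[OF ratio_dec[OF r, of d n] r] by simp
qed

theorem lemma1:
  fixes q e n1 n2 :: nat
  assumes "q \<ge> 2" and "1 \<le> n1" and "n1 \<le> n2"
  shows "B_H q n1 e * B_H q n2 e \<le> B_H q (n1 - 1) e * B_H q (n2 + 1) e"
proof -
  define r where "r = real q - 1"
  have r: "r \<ge> 0" using assms(1) by (simp add: r_def)
  have BH: "\<And>n. B_H q n e = real q ^ n / VV r e n"
    by (simp add: B_H_def VV_def r_def)
  obtain m where m: "n1 = Suc m" using assms(2) by (cases n1) auto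
  have mn: "m \<le> n2" using assms(3) m by simp
  have main: "VV r e m * VV r e (Suc n2) \<le> VV r e (Suc m) * VV r e n2"
  proof (cases e)
    case 0
    then show ?thesis by (simp add: VV_def)
  next
    case (Suc d)
    have "VV r (Suc d) (Suc n2) / VV r (Suc d) n2 \<le> VV r (Suc d) (Suc m) / VV r (Suc d) m"
      using decseqD[OF f_dec[OF r, of d] mn] by simp
    then show ?thesis using VV_pos[OF r, of "Suc d"] Suc by (simp add: divide_simps mult.commute)
  qed
  have P: "real q ^ n1 * real q ^ n2 = real q ^ m * real q ^ (n2 + 1)"
    using m by (simp add: power_add)
  have pos: "\<And>n. VV r e n > 0" using VV_pos[OF r] .
  have qpos: "real q ^ m * real q ^ (n2 + 1) \<ge> 0" by simp
  show ?thesis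
    unfolding BH using m P main pos[of m] pos[of n2] pos[of "Suc m"] pos[of "Suc n2"] qpos
    apply (simp add: divide_simps)
    using mult_left_mono[OF main qpos] by (simp add: algebra_simps)
qed

end
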